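(* Let $k\ge 3$. A graph $G$ is $k$-chromatic and mixed-double-critical if and only if $G$ is the complete graph $K_k$.
   Context: All graphs are finite and simple. A graph $G$ is (vertex-)critical if $\chi(G-v)<\chi(G)$ for every vertex $v$. A vertex-critical $k$-chromatic graph $G$ is mixed-double-critical if for every vertex $x\in V(G)$ and every edge $e\in E(G-x)$ we have $\chi(G-x-e)\le\chi(G)-2$. *)

theory Defs
  imports Main
begin

type_synonym 'a graph = "'a set \<times> 'a set set"

definition verts :: "'a graph \<Rightarrow> 'a set" where "verts G = fst G"
definition edges :: "'a graph \<Rightarrow> 'a set set" where "edges G = snd G"

definition finite_simple_graph :: "'a graph \<Rightarrow> bool" where
  "finite_simple_graph G \<longleftrightarrow> finite (verts G) \<and>
     (\<forall>e\<in>edges G. e \<subseteq> verts G \<and> card e = 2)"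

definition colorable :: "'a graph \<Rightarrow> nat \<Rightarrow> bool" where
  "colorable G k \<longleftrightarrow> (\<exists>f. (\<forall>v\<in>verts G. f v < k) \<and>
     (\<forall>u\<in>verts G. \<forall>v\<in>verts G. {u, v} \<in> edges G \<longrightarrow> f u \<noteq> f v))"

definition chromatic_number :: "'a graph \<Rightarrow> nat" where
  "chromatic_number G = (LEAST k. colorable G k)"

definition delete_vertex :: "'a graph \<Rightarrow> 'a \<Rightarrow> 'a graph" where
  "delete_vertex G x = (verts G - {x}, {e\<in>edges G. x \<notin> e})"

definition delete_edge :: "'a graph \<Rightarrow> 'a set \<Rightarrow> 'a graph" where
  "delete_edge G e = (verts G, edges G - {e})"

definition vertex_critical :: "'a graph \<Rightarrow> bool" where
  "vertex_critical G \<longleftrightarrow>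
     (\<forall>v\<in>verts G. chromatic_number (delete_vertex G v) < chromatic_number G)"

definition mixed_double_critical :: "'a graph \<Rightarrow> bool" where
  "mixed_double_critical G \<longleftrightarrow> vertex_critical G \<and>
     (\<forall>x\<in>verts G. \<forall>e\<in>edges (delete_vertex G x).
        chromatic_number (delete_edge (delete_vertex G x) e) \<le> chromatic_number G - 2)"

definition is_complete_graph :: "'a graph \<Rightarrow> nat \<Rightarrow> bool" where
  "is_complete_graph G k \<longleftrightarrow> card (verts G) = k \<and>
     edges G = {e. e \<subseteq> verts G \<and> card e = 2}"

end

theory Submission
  imports Defs
begin

lemma colorable_card:
  assumes "finite_simple_graph G" shows "colorable G (card (verts G))"
proof -
  have fin: "finite (verts G)" using assms by (simp add: finite_simple_graph_def)
  obtain h where h: "bij_betw h (verts G) {0..<card (verts G)}"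
    using ex_bij_betw_finite_nat[OF fin] by blast
  show ?thesis unfolding colorable_def
  proof (intro exI conjI ballI impI)
    fix v assume "v \<in> verts G" thus "h v < card (verts G)" using h by (auto simp: bij_betw_def)
  next
    fix u v assume uv: "u \<in> verts G" "v \<in> verts G" "{u, v} \<in> edges G"
    have "card {u,v} = 2" using assms uv(3) by (simp add: finite_simple_graph_def)
    hence "u \<noteq> v" by auto
    thus "h u \<noteq> h v" using h uv by (auto simp: bij_betw_def inj_on_def)
  qed
qed

lemma chrom_colorable: "finite_simple_graph G \<Longrightarrow> colorable G (chromatic_number G)"
  unfolding chromatic_number_def by (rule LeastI, rule colorable_card)

lemma chrom_le: "colorable G c \<Longrightarrow> chromatic_number G \<le> c"
  unfolding chromatic_number_def by (rule Least_le)

lemma clique_card_le: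
  assumes "finite (verts G)" "\<forall>u\<in>verts G. \<forall>v\<in>verts G. u \<noteq> v \<longrightarrow> {u,v} \<in> edges G"
    "colorable G c"
  shows "card (verts G) \<le> c"
proof -
  obtain f where f: "\<forall>v\<in>verts G. f v < c"
    "\<forall>u\<in>verts G. \<forall>v\<in>verts G. {u, v} \<in> edges G \<longrightarrow> f u \<noteq> f v"
    using assms(3) unfolding colorable_def by blast
  have "inj_on f (verts G)" using f(2) assms(2) by (auto simp: inj_on_def)
  moreover have "f ` verts G \<subseteq> {..<c}" using f(1) by auto
  ultimately have "card (verts G) \<le> card {..<c}" by (rule card_inj_on_le) simp
  thus ?thesis by simp
qed

lemma clique_chrom:
  assumes "finite_simple_graph G" "\<forall>u\<in>verts G. \<forall>v\<in>verts G. u \<noteq> v \<longrightarrow> {u,v} \<in> edges G"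
  shows "chromatic_number G = card (verts G)"
proof -
  have "chromatic_number G \<le> card (verts G)" by (rule chrom_le, rule colorable_card[OF assms(1)])
  moreover have "card (verts G) \<le> chromatic_number G"
    using clique_card_le[OF _ assms(2) chrom_colorable[OF assms(1)]] assms(1)
    by (simp add: finite_simple_graph_def)
  ultimately show ?thesis by simp
qed

lemma fsg_dv: "finite_simple_graph G \<Longrightarrow> finite_simple_graph (delete_vertex G x)"
  by (auto simp: finite_simple_graph_def delete_vertex_def verts_def edges_def)

lemma fsg_de: "finite_simple_graph G \<Longrightarrow> finite_simple_graph (delete_edge G e)"
  by (auto simp: finite_simple_graph_def delete_edge_def verts_def edges_def)

theorem theorem34:
  fixes G :: "'a graph" and k :: nat
  assumes "finite_simple_graph G" and "k \<ge> 3"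
  shows "(chromatic_number G = k \<and> mixed_double_critical G) \<longleftrightarrow> is_complete_graph G k"
proof
  assume A: "chromatic_number G = k \<and> mixed_double_critical G"
  have fin: "finite (verts G)" using assms by (simp add: finite_simple_graph_def)
  have E2: "\<And>e. e \<in> edges G \<Longrightarrow> e \<subseteq> verts G \<and> card e = 2"
    using assms by (simp add: finite_simple_graph_def)
  have nbr: "\<exists>z. {y,z} \<in> edges G" if y: "y \<in> verts G" for y
  proof (rule ccontr)
    assume no: "\<not> ?thesis"
    have noe: "\<And>e. e \<in> edges G \<Longrightarrow> y \<notin> e"
    proof -
      fix e assume e: "e \<in> edges G"
      show "y \<notin> e"
      proof
        assume "y \<in> e"
        from E2[OF e] obtain a b where "e = {a,b}" by (meson card_2_iff)
        with \<open>y \<in> e\<close> e no show False by (auto simp: insert_commute)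
      qed
    qed
    let ?H = "delete_vertex G y"
    let ?m = "chromatic_number ?H"
    have lt: "?m < k" using A y by (auto simp: mixed_double_critical_def vertex_critical_def)
    obtain h where h: "\<forall>v\<in>verts ?H. h v < ?m"
      "\<forall>u\<in>verts ?H. \<forall>v\<in>verts ?H. {u, v} \<in> edges ?H \<longrightarrow> h u \<noteq> h v"
      using chrom_colorable[OF fsg_dv[OF assms(1)]] unfolding colorable_def by blast
    have "colorable G (max ?m 1)" unfolding colorable_def
    proof (intro exI[of _ "h(y := 0)"] conjI ballI impI)
      fix v assume "v \<in> verts G" thus "(h(y := 0)) v < max ?m 1"
        using h(1) by (fastforce simp: delete_vertex_def verts_def less_max_iff_disj)
    next
      fix u v assume uv: "u \<in> verts G" "v \<in> verts G" "{u, v} \<in> edges G"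
      hence "y \<noteq> u" "y \<noteq> v" using noe by auto
      thus "(h(y := 0)) u \<noteq> (h(y := 0)) v"
        using h(2) uv noe by (auto simp: delete_vertex_def verts_def edges_def)
    qed
    hence "k \<le> max ?m 1" using chrom_le A by metis
    thus False using lt assms(2) by auto
  qed
  have adj: "{x,y} \<in> edges G" if xy: "x \<in> verts G" "y \<in> verts G" "x \<noteq> y" for x y
  proof (rule ccontr)
    assume nxy: "{x,y} \<notin> edges G"
    obtain z where z: "{y,z} \<in> edges G" using nbr[OF xy(2)] by blast
    have zx: "z \<noteq> x" using z nxy by (auto simp: insert_commute)
    have "card {y,z} = 2" using E2[OF z] by simp
    hence zy: "z \<noteq> y" by auto
    let ?e = "{y,z}"
    let ?H = "delete_edge (delete_vertex G x) ?e"
    have eH: "?e \<in> edges (delete_vertex G x)" using z zx xy(3)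
      by (auto simp: delete_vertex_def edges_def)
    have le: "chromatic_number ?H \<le> k - 2" using A xy(1) eH
      by (auto simp: mixed_double_critical_def)
    obtain f where f: "\<forall>v\<in>verts ?H. f v < chromatic_number ?H"
      "\<forall>u\<in>verts ?H. \<forall>v\<in>verts ?H. {u, v} \<in> edges ?H \<longrightarrow> f u \<noteq> f v"
      using chrom_colorable[OF fsg_de[OF fsg_dv[OF assms(1)]]] unfolding colorable_def by blast
    have vH: "verts ?H = verts G - {x}" by (simp add: delete_edge_def delete_vertex_def verts_def)
    have eHs: "edges ?H = {e \<in> edges G. x \<notin> e} - {?e}"
      by (simp add: delete_edge_def delete_vertex_def edges_def verts_def)
    let ?g = "f(x := k - 2, y := k - 2)"
    have fb: "\<And>w. w \<in> verts G \<Longrightarrow> w \<noteq> x \<Longrightarrow> f w < k - 2"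
    proof -
      fix w assume "w \<in> verts G" "w \<noteq> x"
      hence "w \<in> verts ?H" using vH by simp
      hence "f w < chromatic_number ?H" using f(1) by blast
      thus "f w < k - 2" using le by linarith
    qed
    have "colorable G (k - 1)" unfolding colorable_def
    proof (intro exI[of _ ?g] conjI ballI impI)
      fix v assume v: "v \<in> verts G"
      show "?g v < k - 1"
      proof (cases "v = x \<or> v = y")
        case True thus ?thesis using assms(2) by auto
      next
        case False
        hence "?g v = f v" by simp
        moreover have "f v < k - 2" using fb[OF v] False by blast
        ultimately show ?thesis by linarith
      qed
    next
      fix u v assume uv: "u \<in> verts G" "v \<in> verts G" "{u, v} \<in> edges G"
      have "card {u,v} = 2" using E2[OF uv(3)] by simp
      hence uv': "u \<noteq> v" by auto
      show "?g u \<noteq> ?g v"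
      proof (cases "u \<in> {x,y}")
        case True
        then show ?thesis
        proof
          assume "u = x"
          hence "v \<noteq> y" using uv nxy by auto
          hence vv: "v \<noteq> x" "v \<noteq> y" using \<open>u = x\<close> uv' by auto
          show ?thesis proof -
            have "?g u = k - 2" using \<open>u = x\<close> xy(3) by simp
            moreover have "?g v = f v" using vv by simp
            moreover have "f v < k - 2" using fb[of v] vv uv by blast
            ultimately show ?thesis by linarith
          qed
        next
          assume "u \<in> {y}"
          hence "u = y" by simp
          hence "v \<noteq> x" using uv nxy by (auto simp: insert_commute)
          hence vv: "v \<noteq> x" "v \<noteq> y" using \<open>u = y\<close> uv' by auto
          show ?thesis proof -
            have "?g u = k - 2" using \<open>u = y\<close> xy(3) by simp
            moreover have "?g v = f v" using vv by simp
            moreover have "f v < k - 2" using fb[of v] vv uv by blast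
            ultimately show ?thesis by linarith
          qed
        qed
      next
        case False
        show ?thesis
        proof (cases "v \<in> {x,y}")
          case True
          then show ?thesis
          proof
            assume "v = x"
            hence "u \<noteq> y" using False by auto
            have uu: "u \<noteq> x" "u \<noteq> y" using False by auto
            show ?thesis proof -
            have "?g v = k - 2" using \<open>v = x\<close> xy(3) by simp
            moreover have "?g u = f u" using uu by simp
            moreover have "f u < k - 2" using fb[of u] uu uv by blast
            ultimately show ?thesis by linarith
          qed
          next
            assume "v \<in> {y}"
            hence "v = y" by simp
            have uu: "u \<noteq> x" "u \<noteq> y" using False by auto
            show ?thesis proof -
            have "?g v = k - 2" using \<open>v = y\<close> xy(3) by simp
            moreover have "?g u = f u" using uu by simp
            moreover have "f u < k - 2" using fb[of u] uu uv by blast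
            ultimately show ?thesis by linarith
          qed
          qed
        next
          case False2: False
          have yn: "y \<notin> {u,v}" using False False2 by auto
          have ne: "{u,v} \<noteq> ?e"
          proof
            assume "{u,v} = ?e"
            hence "y \<in> {u,v}" by simp
            thus False using yn by blast
          qed
          have xn: "x \<notin> {u,v}" using False False2 by auto
          have "{u,v} \<in> {e \<in> edges G. x \<notin> e} - {?e}" using uv(3) ne xn by blast
          hence "{u,v} \<in> edges ?H" using eHs by simp
          moreover have "u \<in> verts ?H" "v \<in> verts ?H" using vH uv False False2 by simp_all
          ultimately have "f u \<noteq> f v" using f(2) by blast
          moreover have "?g u = f u" "?g v = f v" using False False2 by simp_all
          ultimately show ?thesis by simp
        qed
      qed
    qed
    hence "k \<le> k - 1" using chrom_le A by metis
    thus False using assms(2) by auto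
  qed
  have "chromatic_number G = card (verts G)"
    by (rule clique_chrom[OF assms(1)]) (use adj in blast)
  hence card: "card (verts G) = k" using A by simp
  have "edges G = {e. e \<subseteq> verts G \<and> card e = 2}"
  proof
    show "edges G \<subseteq> {e. e \<subseteq> verts G \<and> card e = 2}" using E2 by blast
  next
    show "{e. e \<subseteq> verts G \<and> card e = 2} \<subseteq> edges G"
    proof
      fix e assume "e \<in> {e. e \<subseteq> verts G \<and> card e = 2}"
      then obtain a b where "e = {a,b}" "a \<noteq> b" "a \<in> verts G" "b \<in> verts G"
        by (auto simp: card_2_iff)
      thus "e \<in> edges G" using adj by simp
    qed
  qed
  thus "is_complete_graph G k" using card by (simp add: is_complete_graph_def)
next
  assume C: "is_complete_graph G k"
  have fin: "finite (verts G)" using assms by (simp add: finite_simple_graph_def)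
  have cV: "card (verts G) = k" and EG: "edges G = {e. e \<subseteq> verts G \<and> card e = 2}"
    using C by (auto simp: is_complete_graph_def)
  have adj: "{u,v} \<in> edges G" if "u \<in> verts G" "v \<in> verts G" "u \<noteq> v" for u v
    using that EG by auto
  have chi: "chromatic_number G = k" using clique_chrom[OF assms(1)] adj cV by auto
  have vc: "vertex_critical G" unfolding vertex_critical_def
  proof
    fix v assume v: "v \<in> verts G"
    have vd: "verts (delete_vertex G v) = verts G - {v}" by (simp add: delete_vertex_def verts_def)
    have "\<forall>a\<in>verts (delete_vertex G v). \<forall>b\<in>verts (delete_vertex G v).
            a \<noteq> b \<longrightarrow> {a,b} \<in> edges (delete_vertex G v)"
      using adj by (auto simp: delete_vertex_def verts_def edges_def)
    hence "chromatic_number (delete_vertex G v) = card (verts (delete_vertex G v))"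
      by (rule clique_chrom[OF fsg_dv[OF assms(1)]])
    hence "chromatic_number (delete_vertex G v) = card (verts G - {v})" using vd by simp
    thus "chromatic_number (delete_vertex G v) < chromatic_number G"
      using v fin chi cV assms(2) by (simp add: card_Diff_singleton)
  qed
  have "\<forall>x\<in>verts G. \<forall>e\<in>edges (delete_vertex G x).
        chromatic_number (delete_edge (delete_vertex G x) e) \<le> chromatic_number G - 2"
  proof (intro ballI)
    fix x e assume x: "x \<in> verts G" and e: "e \<in> edges (delete_vertex G x)"
    have e': "e \<in> edges G" "x \<notin> e" using e by (auto simp: delete_vertex_def edges_def)
    have es: "e \<subseteq> verts G" "card e = 2" using e' EG by auto
    then obtain a b where ab0: "e = {a,b}" "a \<noteq> b" by (meson card_2_iff)
    hence ab: "e = {a,b}" "a \<noteq> b" "a \<in> verts G" "b \<in> verts G" using es by auto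
    have ax: "a \<noteq> x" "b \<noteq> x" using ab e' by auto
    let ?W = "verts G - {x} - {b}"
    have cW: "card ?W = k - 2" using cV fin x ab ax by (simp add: card_Diff_singleton)
    have finW: "finite ?W" using fin by simp
    obtain h where h: "bij_betw h ?W {0..<card ?W}"
      using ex_bij_betw_finite_nat[OF finW] by blast
    let ?H = "delete_edge (delete_vertex G x) e"
    have vH: "verts ?H = verts G - {x}" by (simp add: delete_edge_def delete_vertex_def verts_def)
    have eHs: "edges ?H = {e \<in> edges G. x \<notin> e} - {e}"
      by (simp add: delete_edge_def delete_vertex_def edges_def verts_def)
    have aW: "a \<in> ?W" using ab ax by auto
    have hW: "h w < k - 2" if w: "w \<in> ?W" for w
    proof -
      have "h w \<in> h ` ?W" using w by blast
      also have "h ` ?W = {0..<card ?W}" using h by (simp add: bij_betw_def)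
      finally show ?thesis using cW by simp
    qed
    have inj: "inj_on h ?W" using h by (simp add: bij_betw_def)
    have hne: "h p \<noteq> h q" if "p \<in> ?W" "q \<in> ?W" "p \<noteq> q" for p q
      using inj_onD[OF inj _ that(1) that(2)] that(3) by blast
    have "colorable ?H (k - 2)" unfolding colorable_def
    proof (intro exI[of _ "h(b := h a)"] conjI ballI impI)
      fix v assume v: "v \<in> verts ?H"
      show "(h(b := h a)) v < k - 2"
      proof (cases "v = b")
        case True thus ?thesis using hW[OF aW] by simp
      next
        case False
        hence "v \<in> ?W" using v vH by simp
        thus ?thesis using hW False by simp
      qed
    next
      fix u v assume uv: "u \<in> verts ?H" "v \<in> verts ?H" "{u, v} \<in> edges ?H"
      have "{u,v} \<in> {e \<in> edges G. x \<notin> e} - {e}" using uv(3) eHs by simp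
      hence uvE: "{u,v} \<in> edges G" "{u,v} \<noteq> {a,b}" using ab(1) by blast+
      have "{u,v} \<in> {e. e \<subseteq> verts G \<and> card e = 2}" using uvE(1) EG by simp
      hence "card {u,v} = 2" by simp
      hence uv': "u \<noteq> v" by auto
      have uG: "u \<in> verts G - {x}" "v \<in> verts G - {x}" using uv(1,2) vH by simp_all
      show "(h(b := h a)) u \<noteq> (h(b := h a)) v"
      proof (cases "u = b")
        case True
        hence "v \<noteq> a" using uvE by auto
        moreover have "v \<noteq> b" using True uv' by simp
        ultimately have "h a \<noteq> h v" using hne[OF aW, of v] uG by simp
        thus ?thesis using True \<open>v \<noteq> b\<close> by simp
      next
        case False
        show ?thesis
        proof (cases "v = b")
          case True
          hence "u \<noteq> a" using uvE by auto
          hence "h u \<noteq> h a" using hne[OF _ aW, of u] uG False by simp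
          thus ?thesis using True False by simp
        next
          case False2: False
          have "h u \<noteq> h v" using hne[of u v] uG False False2 uv' by simp
          thus ?thesis using False False2 by simp
        qed
      qed
    qed
    thus "chromatic_number ?H \<le> chromatic_number G - 2" using chrom_le chi by metis
  qed
  with vc have "mixed_double_critical G" by (simp add: mixed_double_critical_def)
  with chi show "chromatic_number G = k \<and> mixed_double_critical G" by simp
qed

end
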